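(* Let $1\le p<\infty$ and let $d_{w,p}$ be a Lorentz sequence space. The formal identity operator $j\colon\ell_p\to d_{w,p}$ is finitely strictly singular.
   Context: Let $1\le p<\infty$ and let $w=(w_n)$ be a real sequence with $w_1=1$, $w_n\downarrow 0$ and $\sum_n w_n=\infty$. The Lorentz sequence space $d_{w,p}$ is the Banach space of all $x=(x_n)\in c_0$ with $\|x\|_{d_{w,p}}=\big(\sum_{n}w_n (x^*_n)^p\big)^{1/p}<\infty$, where $(x^*_n)$ is the non-increasing rearrangement of $(|x_n|)$. The formal identity $j\colon\ell_p\to d_{w,p}$ maps the $n$-th unit vector of $\ell_p$ to the $n$-th unit vector of $d_{w,p}$. An operator $T\colon X\to Y$ is finitely strictly singular if for every $\varepsilon>0$ there is $N\in\mathbb N$ such that every subspace $Z\subseteq X$ with $\dim Z\ge N$ contains $z$ with $\|Tz\|<\varepsilon\|z\|$. *)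

theory Defs
  imports "HOL-Analysis.Analysis"
begin

text \<open>Real sequences are functions nat => real; index 0 plays the role of index 1 of the paper.\<close>

definition lp_space :: "real \<Rightarrow> (nat \<Rightarrow> real) set" where
  "lp_space p = {x. summable (\<lambda>n. \<bar>x n\<bar> powr p)}"

definition lp_norm :: "real \<Rightarrow> (nat \<Rightarrow> real) \<Rightarrow> real" where
  "lp_norm p x = (\<Sum>n. \<bar>x n\<bar> powr p) powr (1 / p)"

text \<open>Non-increasing rearrangement of (|x_n|) (for x in c_0):
  x*_n = inf { t >= 0 : at most n indices k have |x_k| > t }.\<close>
definition decr_rearr :: "(nat \<Rightarrow> real) \<Rightarrow> nat \<Rightarrow> real" where
  "decr_rearr x n = Inf {t. 0 \<le> t \<and> finite {k. \<bar>x k\<bar> > t} \<and> card {k. \<bar>x k\<bar> > t} \<le> n}"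

definition lorentz_space :: "(nat \<Rightarrow> real) \<Rightarrow> real \<Rightarrow> (nat \<Rightarrow> real) set" where
  "lorentz_space w p = {x. x \<longlonglongrightarrow> 0 \<and> summable (\<lambda>n. w n * (decr_rearr x n) powr p)}"

definition lorentz_norm :: "(nat \<Rightarrow> real) \<Rightarrow> real \<Rightarrow> (nat \<Rightarrow> real) \<Rightarrow> real" where
  "lorentz_norm w p x = (\<Sum>n. w n * (decr_rearr x n) powr p) powr (1 / p)"

definition is_lorentz_weight :: "(nat \<Rightarrow> real) \<Rightarrow> bool" where
  "is_lorentz_weight w \<longleftrightarrow> w 0 = 1 \<and> decseq w \<and> w \<longlonglongrightarrow> 0 \<and> \<not> summable w"

definition seq_subspace :: "(nat \<Rightarrow> real) set \<Rightarrow> bool" where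
  "seq_subspace Z \<longleftrightarrow> (\<lambda>k. 0) \<in> Z \<and> (\<forall>x\<in>Z. \<forall>y\<in>Z. (\<lambda>k. x k + y k) \<in> Z)
     \<and> (\<forall>c. \<forall>x\<in>Z. (\<lambda>k. c * x k) \<in> Z)"

definition dim_at_least :: "(nat \<Rightarrow> real) set \<Rightarrow> nat \<Rightarrow> bool" where
  "dim_at_least Z N \<longleftrightarrow> (\<exists>v :: nat \<Rightarrow> nat \<Rightarrow> real. (\<forall>i<N. v i \<in> Z) \<and>
     (\<forall>c :: nat \<Rightarrow> real. (\<lambda>k. \<Sum>i<N. c i * v i k) = (\<lambda>k. 0) \<longrightarrow> (\<forall>i<N. c i = 0)))"

definition fin_strictly_singular ::
  "(nat \<Rightarrow> real) set \<Rightarrow> ((nat \<Rightarrow> real) \<Rightarrow> real) \<Rightarrow> ((nat \<Rightarrow> real) \<Rightarrow> real)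
     \<Rightarrow> ((nat \<Rightarrow> real) \<Rightarrow> (nat \<Rightarrow> real)) \<Rightarrow> bool" where
  "fin_strictly_singular X nX nY T \<longleftrightarrow>
     (\<forall>\<epsilon>>0. \<exists>N. \<forall>Z. seq_subspace Z \<and> Z \<subseteq> X \<and> dim_at_least Z N \<longrightarrow>
        (\<exists>z\<in>Z. nY (T z) < \<epsilon> * nX z))"

end

theory Submission
  imports Defs
begin

lemma lp_c0:
  assumes p: "1 \<le> p" and x: "x \<in> lp_space p"
  shows "x \<longlonglongrightarrow> 0"
proof -
  have s: "summable (\<lambda>n. \<bar>x n\<bar> powr p)" using x by (simp add: lp_space_def)
  have "(\<lambda>n. \<bar>x n\<bar> powr p) \<longlonglongrightarrow> 0" using summable_LIMSEQ_zero[OF s] .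
  then have "(\<lambda>n. (\<bar>x n\<bar> powr p) powr (1/p)) \<longlonglongrightarrow> 0"
    by (rule tendsto_zero_powrI) (use p in auto)
  moreover have "(\<bar>x n\<bar> powr p) powr (1/p) = \<bar>x n\<bar>" for n
    using p by (simp add: powr_powr)
  ultimately have "(\<lambda>n. \<bar>x n\<bar>) \<longlonglongrightarrow> 0" by simp
  then show ?thesis by (simp add: tendsto_rabs_zero_iff)
qed

lemma c0_max:
  fixes x :: "nat \<Rightarrow> real"
  assumes "x \<longlonglongrightarrow> 0"
  shows "\<exists>k0. \<forall>k. \<bar>x k\<bar> \<le> \<bar>x k0\<bar>"
proof (cases "\<forall>k. x k = 0")
  case True then show ?thesis by auto
next
  case False
  then obtain j where j: "x j \<noteq> 0" by auto
  then have "\<bar>x j\<bar> > 0" by simp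
  with assms have "\<forall>\<^sub>F k in sequentially. dist (x k) 0 < \<bar>x j\<bar>"
    by (simp add: tendsto_iff)
  then obtain M where M: "\<And>k. k \<ge> M \<Longrightarrow> \<bar>x k\<bar> < \<bar>x j\<bar>"
    by (auto simp: eventually_sequentially)
  define S where "S = {..max M j}"
  have "finite S" "S \<noteq> {}" by (auto simp: S_def)
  then have "Max ((\<lambda>k. \<bar>x k\<bar>) ` S) \<in> (\<lambda>k. \<bar>x k\<bar>) ` S" by simp
  then obtain k0 where k0: "k0 \<in> S" "\<bar>x k0\<bar> = Max ((\<lambda>k. \<bar>x k\<bar>) ` S)" by auto
  have k0': "\<bar>x k\<bar> \<le> \<bar>x k0\<bar>" if "k \<in> S" for k
    using k0(2) \<open>finite S\<close> that by simp
  have "\<bar>x k\<bar> \<le> \<bar>x k0\<bar>" for k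
  proof (cases "k \<in> S")
    case True then show ?thesis by (rule k0')
  next
    case False then have "k \<ge> M" by (auto simp: S_def)
    then have "\<bar>x k\<bar> < \<bar>x j\<bar>" by (rule M)
    also have "\<bar>x j\<bar> \<le> \<bar>x k0\<bar>" by (rule k0') (auto simp: S_def)
    finally show ?thesis by simp
  qed
  then show ?thesis by blast
qed

definition DR :: "(nat \<Rightarrow> real) \<Rightarrow> nat \<Rightarrow> real set" where
  "DR x n = {t. 0 \<le> t \<and> finite {k. \<bar>x k\<bar> > t} \<and> card {k. \<bar>x k\<bar> > t} \<le> n}"

lemma decr_DR: "decr_rearr x n = Inf (DR x n)"
  by (simp add: decr_rearr_def DR_def)

lemma DR_mem:
  assumes "\<And>k. \<bar>x k\<bar> \<le> \<bar>x k0\<bar>"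
  shows "\<bar>x k0\<bar> \<in> DR x n"
proof -
  have "{k. \<bar>x k\<bar> > \<bar>x k0\<bar>} = {}" using assms by (auto simp: not_less)
  then show ?thesis by (simp add: DR_def)
qed

lemma decr_bounds:
  assumes "\<And>k. \<bar>x k\<bar> \<le> \<bar>x k0\<bar>"
  shows "0 \<le> decr_rearr x n" "decr_rearr x n \<le> \<bar>x k0\<bar>"
proof -
  have m: "\<bar>x k0\<bar> \<in> DR x n" using DR_mem[of x k0, OF assms] .
  show "0 \<le> decr_rearr x n" unfolding decr_DR
    by (rule cInf_greatest) (use m in \<open>auto simp: DR_def\<close>)
  show "decr_rearr x n \<le> \<bar>x k0\<bar>" unfolding decr_DR
    by (rule cInf_lower[OF m]) (auto simp: DR_def bdd_below_def)
qed

lemma decr_zero: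
  assumes "\<And>k. \<bar>x k\<bar> \<le> \<bar>x k0\<bar>"
  shows "decr_rearr x 0 = \<bar>x k0\<bar>"
  unfolding decr_DR
proof (rule cInf_eq_minimum[OF DR_mem[of x k0, OF assms]])
  fix t assume "t \<in> DR x 0"
  then have "finite {k. \<bar>x k\<bar> > t}" "card {k. \<bar>x k\<bar> > t} = 0" by (auto simp: DR_def)
  then have "{k. \<bar>x k\<bar> > t} = {}" by (meson card_0_eq)
  then show "\<bar>x k0\<bar> \<le> t" by (auto simp: not_less)
qed

lemma decr_shift:
  assumes "\<And>k. \<bar>x k\<bar> \<le> \<bar>x k0\<bar>"
  shows "decr_rearr (x(k0 := 0)) n = decr_rearr x (Suc n)"
proof -
  have "DR (x(k0 := 0)) n = DR x (Suc n)"
  proof (rule set_eqI)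
    fix t
    show "t \<in> DR (x(k0 := 0)) n \<longleftrightarrow> t \<in> DR x (Suc n)"
    proof (cases "0 \<le> t")
      case False then show ?thesis by (simp add: DR_def)
    next
      case t: True
      define S where "S = {k. \<bar>x k\<bar> > t}"
      have eq: "{k. \<bar>(x(k0 := 0)) k\<bar> > t} = S - {k0}" using t by (auto simp: S_def)
      have fin: "finite (S - {k0}) = finite S" by simp
      have lhs: "t \<in> DR (x(k0 := 0)) n \<longleftrightarrow> finite (S - {k0}) \<and> card (S - {k0}) \<le> n"
        using t unfolding DR_def mem_Collect_eq eq by simp
      have rhs: "t \<in> DR x (Suc n) \<longleftrightarrow> finite S \<and> card S \<le> Suc n"
        using t unfolding DR_def mem_Collect_eq S_def by simp
      show ?thesis
      proof (cases "\<bar>x k0\<bar> > t")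
        case True
        then have "k0 \<in> S" by (simp add: S_def)
        then have "finite S \<Longrightarrow> card (S - {k0}) = card S - 1 \<and> card S \<ge> 1"
          by (metis One_nat_def card_Diff_singleton card_gt_0_iff empty_iff less_eq_Suc_le)
        then show ?thesis unfolding lhs rhs fin by auto
      next
        case False
        then have "S = {}" using assms unfolding S_def by (smt (verit) empty_Collect_eq)
        then show ?thesis unfolding lhs rhs by simp
      qed
    qed
  qed
  then show ?thesis by (simp add: decr_DR)
qed

lemma decr_nonneg:
  fixes x :: "nat \<Rightarrow> real"
  assumes "x \<longlonglongrightarrow> 0"
  shows "0 \<le> decr_rearr x n"
  using c0_max[OF assms] decr_bounds(1) by blast

lemma decr_sum_aux:
  assumes p: "0 < p"
  shows "\<And>x::nat \<Rightarrow> real. x \<longlonglongrightarrow> 0 \<Longrightarrow>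
    \<exists>K. finite K \<and> (\<Sum>n<m. decr_rearr x n powr p) \<le> (\<Sum>k\<in>K. \<bar>x k\<bar> powr p)"
proof (induction m)
  case 0 then show ?case by (intro exI[of _ "{}"]) simp
next
  case (Suc m)
  obtain k0 where k0: "\<And>k. \<bar>x k\<bar> \<le> \<bar>x k0\<bar>" using c0_max[OF Suc.prems] by blast
  define x' where "x' = x(k0 := 0)"
  have "\<forall>\<^sub>F n in sequentially. x n = x' n"
    unfolding eventually_sequentially x'_def by (intro exI[of _ "Suc k0"]) auto
  then have "x' \<longlonglongrightarrow> 0" using Suc.prems by (rule tendsto_cong[THEN iffD1])
  then obtain K' where K': "finite K'" "(\<Sum>n<m. decr_rearr x' n powr p) \<le> (\<Sum>k\<in>K'. \<bar>x' k\<bar> powr p)"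
    using Suc.IH by blast
  have sh: "decr_rearr x' n = decr_rearr x (Suc n)" for n
    unfolding x'_def by (rule decr_shift[of x k0, OF k0])
  have "(\<Sum>n<Suc m. decr_rearr x n powr p) = decr_rearr x 0 powr p + (\<Sum>n<m. decr_rearr x (Suc n) powr p)"
    by (rule sum.lessThan_Suc_shift)
  also have "\<dots> = \<bar>x k0\<bar> powr p + (\<Sum>n<m. decr_rearr x' n powr p)"
    by (simp add: sh decr_zero[of x k0, OF k0])
  also have "\<dots> \<le> \<bar>x k0\<bar> powr p + (\<Sum>k\<in>K'. \<bar>x' k\<bar> powr p)" using K' by simp
  also have "(\<Sum>k\<in>K'. \<bar>x' k\<bar> powr p) = (\<Sum>k\<in>K' - {k0}. \<bar>x' k\<bar> powr p)"
    by (rule sum.mono_neutral_right) (auto simp: K' x'_def)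
  also have "\<dots> = (\<Sum>k\<in>K' - {k0}. \<bar>x k\<bar> powr p)"
    by (rule sum.cong) (auto simp: x'_def)
  also have "\<bar>x k0\<bar> powr p + \<dots> = (\<Sum>k\<in>insert k0 (K' - {k0}). \<bar>x k\<bar> powr p)"
    using K' by (subst sum.insert) auto
  finally show ?case using K' by (intro exI[of _ "insert k0 (K' - {k0})"]) auto
qed

lemma decr_sum_le:
  assumes p: "1 \<le> p" and x: "x \<in> lp_space p"
  shows "(\<Sum>n<m. decr_rearr x n powr p) \<le> (\<Sum>k. \<bar>x k\<bar> powr p)"
proof -
  obtain K where K: "finite K" and K2: "(\<Sum>n<m. decr_rearr x n powr p) \<le> (\<Sum>k\<in>K. \<bar>x k\<bar> powr p)"
    using decr_sum_aux[of p x m] lp_c0[OF p x] p by auto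
  note K2 also have "\<dots> \<le> (\<Sum>k. \<bar>x k\<bar> powr p)"
    by (rule sum_le_suminf) (use x K in \<open>auto simp: lp_space_def\<close>)
  finally show ?thesis .
qed

lemma weight_props:
  assumes "is_lorentz_weight w"
  shows "0 \<le> w n" "w n \<le> 1" "m \<le> n \<Longrightarrow> w n \<le> w m"
proof -
  have d: "decseq w" and l: "w \<longlonglongrightarrow> 0" and w0: "w 0 = 1"
    using assms by (auto simp: is_lorentz_weight_def)
  show "0 \<le> w n" using decseq_ge[OF d l] .
  show "w n \<le> 1" using d w0 by (metis decseqD le0)
  show "m \<le> n \<Longrightarrow> w n \<le> w m" using d by (simp add: decseqD)
qed

lemma lp_in_lorentz:
  assumes p: "1 \<le> p" and w: "is_lorentz_weight w" and x: "x \<in> lp_space p"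
  shows "x \<in> lorentz_space w p"
proof -
  have nn: "0 \<le> w n * decr_rearr x n powr p" for n
    using weight_props(1)[OF w] by simp
  have "(\<Sum>n\<le>m. w n * decr_rearr x n powr p) \<le> (\<Sum>k. \<bar>x k\<bar> powr p)" for m
  proof -
    have "(\<Sum>n\<le>m. w n * decr_rearr x n powr p) \<le> (\<Sum>n<Suc m. decr_rearr x n powr p)"
      unfolding lessThan_Suc_atMost
      by (rule sum_mono) (use weight_props(1,2)[OF w] in \<open>simp add: mult_left_le_one_le mult_le_one\<close>)
    also have "\<dots> \<le> (\<Sum>k. \<bar>x k\<bar> powr p)" by (rule decr_sum_le[OF p x])
    finally show ?thesis .
  qed
  then have "summable (\<lambda>n. w n * decr_rearr x n powr p)"
    by (rule bounded_imp_summable[OF nn])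
  then show ?thesis using lp_c0[OF p x] by (simp add: lorentz_space_def)
qed

lemma subspace_sum:
  assumes Z: "seq_subspace Z" and I: "finite I" and v: "\<And>i. i \<in> I \<Longrightarrow> v i \<in> Z"
  shows "(\<lambda>k. \<Sum>i\<in>I. c i * v i k) \<in> Z"
  using I v
proof (induction I rule: finite_induct)
  case empty then show ?case using Z by (simp add: seq_subspace_def)
next
  case (insert i I)
  have a: "(\<lambda>k. c i * v i k) \<in> Z" using Z insert.prems by (simp add: seq_subspace_def)
  have b: "(\<lambda>k. \<Sum>i\<in>I. c i * v i k) \<in> Z" using insert by simp
  have add: "\<And>x y. x \<in> Z \<Longrightarrow> y \<in> Z \<Longrightarrow> (\<lambda>k. x k + y k) \<in> Z"
    using Z by (simp add: seq_subspace_def)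
  have "(\<lambda>k. c i * v i k + (\<Sum>i\<in>I. c i * v i k)) \<in> Z"
    using add[OF a b] by simp
  then show ?case using insert.hyps by simp
qed

lemma lin_alg:
  fixes A :: "nat set"
  assumes "finite A"
  shows "\<And>(I::nat set) (v :: nat \<Rightarrow> nat \<Rightarrow> real). finite I \<Longrightarrow> card A < card I \<Longrightarrow>
    \<exists>c. (\<exists>i\<in>I. c i \<noteq> 0) \<and> (\<forall>k\<in>A. (\<Sum>i\<in>I. c i * v i k) = 0)"
  using assms
proof (induction A rule: finite_induct)
  case (empty I v)
  then obtain i where "i \<in> I" by (metis card.empty card_gt_0_iff ex_in_conv)
  then show ?case by (intro exI[of _ "\<lambda>_. 1"]) auto
next
  case (insert k B I v)
  show ?case
  proof (cases "\<forall>i\<in>I. v i k = 0")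
    case True
    obtain c where c: "\<exists>i\<in>I. c i \<noteq> 0" "\<forall>k\<in>B. (\<Sum>i\<in>I. c i * v i k) = 0"
      using insert.IH[of I v] insert.prems insert.hyps by auto
    then show ?thesis using True by (intro exI[of _ c]) auto
  next
    case False
    then obtain i0 where i0: "i0 \<in> I" "v i0 k \<noteq> 0" by auto
    define I' where "I' = I - {i0}"
    define u where "u i k' = v i k' - v i k / v i0 k * v i0 k'" for i k'
    have cI': "card B < card I'" using insert.prems insert.hyps i0 by (simp add: I'_def)
    obtain c' where c': "\<exists>i\<in>I'. c' i \<noteq> 0" "\<forall>k'\<in>B. (\<Sum>i\<in>I'. c' i * u i k') = 0"
      using insert.IH[of I' u] cI' insert.prems by (auto simp: I'_def)
    define c where "c = c'(i0 := - (\<Sum>i\<in>I'. c' i * v i k) / v i0 k)"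
    have fI': "finite I'" using insert.prems by (simp add: I'_def)
    have I: "I = insert i0 I'" "i0 \<notin> I'" using i0 by (auto simp: I'_def)
    have key: "(\<Sum>i\<in>I. c i * v i k') = (\<Sum>i\<in>I'. c' i * u i k')" for k'
    proof -
      have "(\<Sum>i\<in>I. c i * v i k') = c i0 * v i0 k' + (\<Sum>i\<in>I'. c' i * v i k')"
      proof -
        have "(\<Sum>i\<in>I'. c i * v i k') = (\<Sum>i\<in>I'. c' i * v i k')"
          by (rule sum.cong) (use I(2) in \<open>auto simp: c_def\<close>)
        then show ?thesis unfolding I(1) using fI' I(2) by simp
      qed
      also have "\<dots> = (\<Sum>i\<in>I'. c' i * u i k')"
        unfolding u_def c_def using i0(2)
        by (simp add: algebra_simps sum_subtractf sum_distrib_left sum_divide_distrib sum_distrib_right)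
      finally show ?thesis .
    qed
    have uk: "u i k = 0" for i using i0(2) by (simp add: u_def)
    show ?thesis
    proof (intro exI[of _ c] conjI)
      show "\<exists>i\<in>I. c i \<noteq> 0" using c'(1) I by (auto simp: c_def)
      show "\<forall>k'\<in>insert k B. (\<Sum>i\<in>I. c i * v i k') = 0"
        using c'(2) by (auto simp: key uk)
    qed
  qed
qed

lemma key_step:
  assumes p: "1 \<le> p" and Z: "seq_subspace Z" and ZL: "Z \<subseteq> lp_space p"
    and dim: "dim_at_least Z N"
  shows "a \<le> N \<Longrightarrow> \<exists>z\<in>Z. (\<forall>k. \<bar>z k\<bar> \<le> 1) \<and>
            (\<exists>A. finite A \<and> card A = a \<and> (\<forall>k\<in>A. \<bar>z k\<bar> = 1))"
proof (induction a)
  case 0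
  have "(\<lambda>k. 0) \<in> Z" using Z by (simp add: seq_subspace_def)
  then show ?case by (intro bexI[of _ "\<lambda>k. 0"]) (auto intro!: exI[of _ "{}"])
next
  case (Suc a)
  then obtain z A where zZ: "z \<in> Z" and z1: "\<And>k. \<bar>z k\<bar> \<le> 1" and A: "finite A" "card A = a"
    and zA: "\<And>k. k \<in> A \<Longrightarrow> \<bar>z k\<bar> = 1" by auto
  have aN: "a < N" using Suc.prems by simp
  show ?case
  proof (cases "\<exists>j. j \<notin> A \<and> \<bar>z j\<bar> = 1")
    case True
    then obtain j where "j \<notin> A" "\<bar>z j\<bar> = 1" by auto
    then show ?thesis using zZ z1 A zA
      by (intro bexI[of _ z] conjI exI[of _ "insert j A"]) auto
  next
    case False
    then have zlt: "\<And>k. k \<notin> A \<Longrightarrow> \<bar>z k\<bar> < 1" using z1 by (meson order_le_imp_less_or_eq)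
    obtain v where vZ: "\<And>i. i < N \<Longrightarrow> v i \<in> Z" and
      ind: "\<And>c. (\<lambda>k. \<Sum>i<N. c i * v i k) = (\<lambda>k. 0) \<Longrightarrow> \<forall>i<N. c i = 0"
      using dim unfolding dim_at_least_def by blast
    obtain c where c1: "\<exists>i\<in>{..<N}. c i \<noteq> 0" and c2: "\<forall>k\<in>A. (\<Sum>i\<in>{..<N}. c i * v i k) = 0"
      using lin_alg[OF A(1), of "{..<N}" v] A aN by auto
    define y where "y = (\<lambda>k. \<Sum>i<N. c i * v i k)"
    have yZ: "y \<in> Z" unfolding y_def by (rule subspace_sum[OF Z]) (auto intro: vZ)
    have yA: "\<And>k. k \<in> A \<Longrightarrow> y k = 0" using c2 by (simp add: y_def)
    have "y \<noteq> (\<lambda>k. 0)" using ind c1 unfolding y_def by auto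
    then obtain j where yj: "y j \<noteq> 0" by auto
    then have jA: "j \<notin> A" using yA by auto
    have y0: "y \<longlonglongrightarrow> 0" using lp_c0[OF p] yZ ZL by auto
    have z0: "z \<longlonglongrightarrow> 0" using lp_c0[OF p] zZ ZL by auto
    define s where "s k = max (y k / (1 - z k)) (- y k / (1 + z k))" for k
    have "s \<longlonglongrightarrow> max (0 / (1 - 0)) (- 0 / (1 + 0))"
      unfolding s_def by (intro tendsto_intros y0 z0) auto
    then have s0: "s \<longlonglongrightarrow> 0" by simp
    obtain k1 where k1: "\<And>k. \<bar>s k\<bar> \<le> \<bar>s k1\<bar>" using c0_max[OF s0] by blast
    have snn: "0 \<le> s k" for k
    proof (cases "k \<in> A")
      case True then show ?thesis by (simp add: s_def yA)
    next
      case False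
      then have "\<bar>z k\<bar> < 1" by (rule zlt)
      then have "0 < 1 - z k" "0 < 1 + z k" by auto
      then show ?thesis unfolding s_def
        by (cases "y k \<ge> 0") (auto simp: le_max_iff_disj divide_neg_pos less_imp_le)
    qed
    define S where "S = s k1"
    have sk: "s k \<le> S" for k using k1[of k] snn[of k] snn[of k1] by (simp add: S_def)
    have "0 < s j"
    proof -
      have "\<bar>z j\<bar> < 1" using zlt jA by blast
      then have "0 < 1 - z j" "0 < 1 + z j" by auto
      then show ?thesis unfolding s_def using yj
        by (cases "y j > 0") (auto simp: less_max_iff_disj divide_neg_pos)
    qed
    then have Spos: "0 < S" using sk[of j] by simp
    define T where "T = 1 / S"
    have TS: "T * S = 1" "0 < T" using Spos by (auto simp: T_def)
    define z' where "z' = (\<lambda>k. z k + T * y k)"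
    have z'Z: "z' \<in> Z"
    proof -
      have "(\<lambda>k. T * y k) \<in> Z" using Z yZ by (simp add: seq_subspace_def)
      moreover have "\<And>x y. x \<in> Z \<Longrightarrow> y \<in> Z \<Longrightarrow> (\<lambda>k. x k + y k) \<in> Z"
        using Z by (simp add: seq_subspace_def)
      ultimately show ?thesis using zZ unfolding z'_def by force
    qed
    have bnd: "\<bar>z' k\<bar> \<le> 1" for k
    proof (cases "k \<in> A")
      case True then show ?thesis using z1[of k] by (simp add: z'_def yA)
    next
      case False
      then have "\<bar>z k\<bar> < 1" by (rule zlt)
      then have d: "0 < 1 - z k" "0 < 1 + z k" by auto
      have e1: "y k / (1 - z k) \<le> S" and e2: "(- y k) / (1 + z k) \<le> S" using sk[of k] by (auto simp: s_def)
      have "y k \<le> S * (1 - z k)" using e1 unfolding pos_divide_le_eq[OF d(1)] by (simp add: mult.commute)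
      moreover have "- y k \<le> S * (1 + z k)" using e2 unfolding pos_divide_le_eq[OF d(2)] by (simp add: mult.commute)
      ultimately have f1: "y k \<le> S * (1 - z k)" and f2: "- y k \<le> S * (1 + z k)" by auto
      have "T * y k \<le> T * (S * (1 - z k))" using mult_left_mono[OF f1] TS(2) by simp
      moreover have "T * (- y k) \<le> T * (S * (1 + z k))" using mult_left_mono[OF f2, of T] TS(2) by linarith
      ultimately have "T * y k \<le> 1 - z k" "- (T * y k) \<le> 1 + z k"
        using TS(1) by (auto simp: mult.assoc[symmetric])
      then show ?thesis by (simp add: z'_def abs_le_iff)
    qed
    have k1A: "k1 \<notin> A" using Spos yA by (auto simp: S_def s_def)
    have "\<bar>z k1\<bar> < 1" using zlt k1A by blast
    then have d: "0 < 1 - z k1" "0 < 1 + z k1" by auto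
    have "\<bar>z' k1\<bar> = 1"
    proof (cases "y k1 / (1 - z k1) \<ge> - y k1 / (1 + z k1)")
      case True
      then have "y k1 / (1 - z k1) = S" by (simp add: S_def s_def max_def)
      then have "y k1 = S * (1 - z k1)" using d by (auto simp: divide_eq_eq mult.commute)
      then have "T * y k1 = 1 - z k1" using TS(1) by (simp add: mult.assoc[symmetric])
      then show ?thesis by (simp add: z'_def)
    next
      case False
      then have "- y k1 / (1 + z k1) = S" by (simp add: S_def s_def max_def)
      then have "- y k1 = S * (1 + z k1)" using d by (auto simp: divide_eq_eq mult.commute)
      then have "T * (- y k1) = 1 + z k1" using TS(1) by (simp add: mult.assoc[symmetric])
      then have "z' k1 = -1" by (simp add: z'_def algebra_simps)
      then show ?thesis by simp
    qed
    moreover have "\<bar>z' k\<bar> = 1" if "k \<in> A" for k using zA[OF that] yA[OF that] by (simp add: z'_def)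
    ultimately show ?thesis using z'Z bnd A k1A
      by (intro bexI[of _ z'] conjI exI[of _ "insert k1 A"]) auto
  qed
qed

lemma count_le: "(\<Sum>n<m. (if n < K then 1 else 0 :: real)) = real (min m K)"
  by (induction m) auto

theorem theorem4p3:
  fixes p :: real and w :: "nat \<Rightarrow> real"
  assumes "1 \<le> p" and "is_lorentz_weight w"
  shows "(\<forall>x\<in>lp_space p. x \<in> lorentz_space w p) \<and>
         fin_strictly_singular (lp_space p) (lp_norm p) (lorentz_norm w p) (\<lambda>x. x)"
proof
  note p = assms(1) and w = assms(2)
  show "\<forall>x\<in>lp_space p. x \<in> lorentz_space w p" using lp_in_lorentz[OF p w] by blast
  show "fin_strictly_singular (lp_space p) (lp_norm p) (lorentz_norm w p) (\<lambda>x. x)"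
    unfolding fin_strictly_singular_def
  proof (intro allI impI)
    fix \<epsilon> :: real assume eps: "\<epsilon> > 0"
    define \<delta> where "\<delta> = \<epsilon> powr p"
    have dpos: "\<delta> > 0" using eps by (simp add: \<delta>_def)
    have "w \<longlonglongrightarrow> 0" using w by (simp add: is_lorentz_weight_def)
    then have "\<forall>\<^sub>F n in sequentially. dist (w n) 0 < \<delta> / 2" using dpos
      unfolding tendsto_iff by (metis half_gt_zero)
    then obtain K where "\<forall>n\<ge>K. dist (w n) 0 < \<delta> / 2" by (auto simp: eventually_sequentially)
    then have "dist (w K) 0 < \<delta> / 2" by simp
    then have wK: "w K < \<delta> / 2" by (simp add: dist_real_def)
    define N where "N = nat \<lceil>2 * K / \<delta>\<rceil> + 1"
    have "2 * K / \<delta> < real N" unfolding N_def by linarith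
    then have KN: "real K < \<delta> / 2 * real N" using dpos by (simp add: field_simps)
    show "\<exists>N. \<forall>Z. seq_subspace Z \<and> Z \<subseteq> lp_space p \<and> dim_at_least Z N \<longrightarrow>
          (\<exists>z\<in>Z. lorentz_norm w p z < \<epsilon> * lp_norm p z)"
    proof (intro exI[of _ N] allI impI)
      fix Z assume H: "seq_subspace Z \<and> Z \<subseteq> lp_space p \<and> dim_at_least Z N"
      obtain z A where zZ: "z \<in> Z" and z1: "\<And>k. \<bar>z k\<bar> \<le> 1" and A: "finite A" "card A = N"
        and zA: "\<And>k. k \<in> A \<Longrightarrow> \<bar>z k\<bar> = 1"
        using key_step[OF p, of Z N N] H by auto
      have zl: "z \<in> lp_space p" using zZ H by auto
      define S where "S = (\<Sum>k. \<bar>z k\<bar> powr p)"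
      have sumz: "summable (\<lambda>k. \<bar>z k\<bar> powr p)" using zl by (simp add: lp_space_def)
      have "real N = (\<Sum>k\<in>A. \<bar>z k\<bar> powr p)" using A zA by simp
      also have "\<dots> \<le> S" unfolding S_def by (rule sum_le_suminf[OF sumz A(1)]) auto
      finally have NS: "real N \<le> S" .
      have Spos: "0 < S" using NS N_def by simp
      define L where "L = (\<Sum>n. w n * decr_rearr z n powr p)"
      have sumL: "summable (\<lambda>n. w n * decr_rearr z n powr p)"
        using lp_in_lorentz[OF p w zl] by (simp add: lorentz_space_def)
      obtain k0 where k0: "\<And>k. \<bar>z k\<bar> \<le> \<bar>z k0\<bar>" using c0_max[OF lp_c0[OF p zl]] by blast
      have dz: "0 \<le> decr_rearr z n" "decr_rearr z n \<le> 1" for n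
        using decr_bounds[of z k0 n, OF k0] z1[of k0] by auto
      have termb: "w n * decr_rearr z n powr p \<le> (if n < K then 1 else 0) + w K * decr_rearr z n powr p" for n
      proof (cases "n < K")
        case True
        have "w n * decr_rearr z n powr p \<le> 1"
          using weight_props(1,2)[OF w, of n] powr_le1[of p "decr_rearr z n"] dz[of n] p
          by (simp add: mult_le_one)
        moreover have "0 \<le> w K * decr_rearr z n powr p" using weight_props(1)[OF w, of K] by simp
        ultimately show ?thesis using True by simp
      next
        case False
        then have "w n \<le> w K" using weight_props(3)[OF w, of K n] by simp
        then show ?thesis using False by (simp add: mult_right_mono)
      qed
      have "L \<le> real K + w K * S" unfolding L_def
      proof (rule suminf_le_const[OF sumL])
        fix m
        have "(\<Sum>n<m. w n * decr_rearr z n powr p) \<le> (\<Sum>n<m. (if n < K then 1 else 0) + w K * decr_rearr z n powr p)"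
          by (rule sum_mono) (rule termb)
        also have "\<dots> = real (min m K) + w K * (\<Sum>n<m. decr_rearr z n powr p)"
          by (simp add: sum.distrib count_le sum_distrib_left)
        also have "\<dots> \<le> real K + w K * S"
          using decr_sum_le[OF p zl, of m] weight_props(1)[OF w, of K]
          by (intro add_mono mult_left_mono) (auto simp: S_def)
        finally show "(\<Sum>n<m. w n * decr_rearr z n powr p) \<le> real K + w K * S" .
      qed
      also have "\<dots> < \<delta> * S"
      proof -
        have "w K * S \<le> \<delta> / 2 * S" using wK Spos by simp
        moreover have "\<delta> / 2 * real N \<le> \<delta> / 2 * S" using NS dpos by (intro mult_left_mono) auto
        ultimately show ?thesis using KN by linarith
      qed
      finally have LS: "L < \<delta> * S" .
      have L0: "0 \<le> L" unfolding L_def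
        by (rule suminf_nonneg[OF sumL]) (use weight_props(1)[OF w] in simp)
      have "lorentz_norm w p z = L powr (1/p)" by (simp add: lorentz_norm_def L_def)
      also have "\<dots> < (\<delta> * S) powr (1/p)" using LS L0 p by (intro powr_less_mono2) auto
      also have "\<dots> = \<epsilon> * S powr (1/p)"
        using dpos Spos eps p by (simp add: powr_mult \<delta>_def powr_powr)
      also have "\<dots> = \<epsilon> * lp_norm p z" by (simp add: lp_norm_def S_def)
      finally show "\<exists>z\<in>Z. lorentz_norm w p z < \<epsilon> * lp_norm p z" using zZ by blast
    qed
  qed
qed

end
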